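(* Let $\chi=(\chi_u,\ (\chi^k_\alpha)_{k\in\mathbb Z_+,\alpha\in N},\ \chi_{p,0},\ \chi_{p,1})$ be a family of elements of $\mathcal A(\mathbf{CPE})$ with only finitely many nonzero members. Then $\chi$ satisfies the system $$\begin{aligned} &D_1\chi_u+2D_\alpha(u^\alpha_{(1)}\chi_{p,1})=0,\\ &D_1\chi^k_\alpha+\delta^k_0D_\alpha\chi_u+\chi^{k-1}_\alpha+2\big(\delta^k_0D_\alpha(u^\beta_{(\beta)}\chi_{p,1})-\delta^k_1u^1_{(\alpha)}\chi_{p,1}+\delta^k_0D_\beta(u^\beta_{(\alpha)}\chi_{p,1})\big)=0\quad(k\in\mathbb Z_+,\ \alpha\in N,\ \chi^{-1}_\alpha:=0),\\ &D_1\chi_{p,0}-\Delta'\chi_{p,1}=0,\\ &D_1\chi_{p,1}+\chi_{p,0}=0 \end{aligned}$$ if and only if $$\chi^0_\alpha=2u^1_{(\alpha)}\chi_{p,1},\qquad \chi^k_\alpha=0\ (k\ge1),\qquad \chi_{p,0}=-D_1\chi_{p,1}\qquad(\alpha\in N),$$ where $\chi_{p,1}$ and $\chi_u$ satisfy $$\Delta\chi_{p,1}=0,\qquad \big(u^\mu_{(1)}D_\mu D_\alpha-u^\mu_{(\alpha)}D_\mu D_1\big)\chi_{p,1}=0\quad(\alpha\in N),$$ $$D_1\chi_u=-2D_\alpha(u^\alpha_{(1)}\chi_{p,1}),\qquad D_\alpha\chi_u=-2\big(u^\mu_{(\alpha)}D_\mu\chi_{p,1}+D_\alpha(u^\beta_{(\beta)}\chi_{p,1})\big)\quad(\alpha\in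 N).$$
   Context: Fix an integer $m\ge 2$, $M=\{1,\dots,m\}$, $N=\{2,\dots,m\}$. Indices $\lambda,\mu,\nu$ range over $M$, indices $\alpha,\beta$ over $N$; repeated upper/lower indices are summed; $\delta^k_l$ is the Kronecker delta. $\mathbb I=\mathbb Z_+^m$ is the set of multi-indices $\mathrm i=(i^1,\dots,i^m)$; $\mathrm i+(\mu)$ is $\mathrm i$ with its $\mu$-th entry increased by $1$, $(\mu)=0+(\mu)$, $2(\mu)=(\mu)+(\mu)$; $\mathbb I_0=\{\mathrm i: i^1=0\}$, $\mathbb I_1=\{\mathrm i: i^1\in\{0,1\}\}$. The space $\mathbf B$ has coordinates $x^\mu$, $u^\mu_{\mathrm i}$, $p_{\mathrm i}$ ($\mathrm i\in\mathbb I$); $\mathcal A(\mathbf B)$ is the algebra of smooth real functions depending on finitely many coordinates; total derivatives $D_\mu=\partial_{x^\mu}+u^\lambda_{\mathrm i+(\mu)}\partial_{u^\lambda_{\mathrm i}}+p_{\mathrm i+(\mu)}\partial_{p_{\mathrm i}}$ (commuting), $D_{\mathrm i}=D_1^{i^1}\cdots D_m^{i^m}$, $\Delta=\sum_{\mu\in M}D_\mu^2$, $\Delta'=\sum_{\alpha\in N}D_\alpha^2$. Let $CE_{\mathrm i}=u^\mu_{\mathrm i+(\mu)}$ and $PE_{\mathrm i}=\Delta p_{\mathrm i}+D_{\mathrm i}(u^\lambda_{(\mu)}u^\mu_{(\lambda)})$, where $\Delta p_{\mathrm i}=\sum_\mu p_{\mathrm i+2(\mu)}$. Let $\mathcal J\subset\mathcal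 A(\mathbf B)$ be the ideal generated by all $CE_{\mathrm i}$ and $PE_{\mathrm i}$, $\mathrm i\in\mathbb I$ (stable under the $D_\mu$), and $\mathcal A(\mathbf{CPE})=\mathcal A(\mathbf B)/\mathcal J$ with the induced commuting derivations $D_\mu$. Concretely, $\mathcal A(\mathbf{CPE})$ consists of smooth functions of finitely many of the global coordinates $x^\mu$, $u^1_{\mathrm i}$ ($\mathrm i\in\mathbb I_0$), $u^\alpha_{\mathrm i}$ ($\alpha\in N$, $\mathrm i\in\mathbb I$), $p_{\mathrm i}$ ($\mathrm i\in\mathbb I_1$), where the remaining variables are expressed recursively by $u^1_{\mathrm k}=-u^\beta_{\mathrm k-(1)+(\beta)}$ ($k^1\ge1$) and $p_{\mathrm k}=-D_{\mathrm k-2(1)}\Phi$ ($k^1\ge2$), with $\Phi=\Delta'p+u^\lambda_{(\mu)}u^\mu_{(\lambda)}$ in which $u^1_{(1)}$ is replaced by $-u^\alpha_{(\alpha)}$; the derivations $D_\mu$ act by the formula above followed by these substitutions. (In the paper the components $\chi_u,\chi^k_\alpha,\chi_{p,0},\chi_{p,1}$ are denoted $\chi^0_1,\chi^{i^1}_\alpha,\chi^0,\chi^1$, and the system is written $(D_1+\mathrm f^* )\chi=0$.) *)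

theory Defs
  imports "HOL-Analysis.Analysis"
begin

text \<open>Coordinates of the jet space B: x^mu, u^mu_i, p_i.  Multi-indices are
functions nat => nat supported in {1..m}.\<close>

datatype coord = X nat | U nat "nat \<Rightarrow> nat" | P "nat \<Rightarrow> nat"

type_synonym fn = "(coord \<Rightarrow> real) \<Rightarrow> real"

definition mi :: "nat \<Rightarrow> (nat \<Rightarrow> nat) \<Rightarrow> bool" where
  "mi m i \<longleftrightarrow> (\<forall>j. j \<notin> {1..m} \<longrightarrow> i j = 0)"

definition valid_coord :: "nat \<Rightarrow> coord \<Rightarrow> bool" where
  "valid_coord m c = (case c of X mu \<Rightarrow> mu \<in> {1..m}
                      | U mu i \<Rightarrow> mu \<in> {1..m} \<and> mi m i
                      | P i \<Rightarrow> mi m i)"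

definition shift :: "(nat \<Rightarrow> nat) \<Rightarrow> nat \<Rightarrow> (nat \<Rightarrow> nat)" where
  "shift i mu = i(mu := Suc (i mu))"

definition unit :: "nat \<Rightarrow> (nat \<Rightarrow> nat)" where
  "unit mu = shift (\<lambda>_. 0) mu"

definition supp :: "fn \<Rightarrow> coord set" where
  "supp f = {c. \<exists>v t. f (v(c := t)) \<noteq> f v}"

definition pd :: "coord \<Rightarrow> fn \<Rightarrow> fn" where
  "pd c f = (\<lambda>v. deriv (\<lambda>t. f (v(c := t))) (v c))"

coinductive smooth :: "fn \<Rightarrow> bool" where
  "finite (supp f) \<Longrightarrow> continuous_on UNIV f
   \<Longrightarrow> (\<forall>c v. (\<lambda>t. f (v(c := t))) differentiable (at (v c)))
   \<Longrightarrow> (\<forall>c. smooth (pd c f)) \<Longrightarrow> smooth f"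

definition AB :: "nat \<Rightarrow> fn set" where
  "AB m = {f. finite (supp f) \<and> (\<forall>c\<in>supp f. valid_coord m c) \<and> smooth f}"

fun tcoef :: "nat \<Rightarrow> coord \<Rightarrow> (coord \<Rightarrow> real) \<Rightarrow> real" where
  "tcoef mu (X nu) v = (if nu = mu then 1 else 0)"
| "tcoef mu (U lam i) v = v (U lam (shift i mu))"
| "tcoef mu (P i) v = v (P (shift i mu))"

definition Dt :: "nat \<Rightarrow> fn \<Rightarrow> fn" where
  "Dt mu f = (\<lambda>v. \<Sum>c\<in>supp f. tcoef mu c v * pd c f v)"

definition Dmi :: "nat \<Rightarrow> (nat \<Rightarrow> nat) \<Rightarrow> fn \<Rightarrow> fn" where
  "Dmi m i f = foldr (\<lambda>mu g. (Dt mu ^^ i mu) g) [1..<Suc m] f"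

definition uc :: "nat \<Rightarrow> nat \<Rightarrow> fn" where
  "uc lam mu = (\<lambda>v. v (U lam (unit mu)))"

definition CE :: "nat \<Rightarrow> (nat \<Rightarrow> nat) \<Rightarrow> fn" where
  "CE m i = (\<lambda>v. \<Sum>mu\<in>{1..m}. v (U mu (shift i mu)))"

definition PE :: "nat \<Rightarrow> (nat \<Rightarrow> nat) \<Rightarrow> fn" where
  "PE m i = (\<lambda>v. (\<Sum>mu\<in>{1..m}. v (P (shift (shift i mu) mu)))
      + Dmi m i (\<lambda>w. \<Sum>lam\<in>{1..m}. \<Sum>mu\<in>{1..m}. w (U lam (unit mu)) * w (U mu (unit lam))) v)"

definition gens :: "nat \<Rightarrow> fn set" where
  "gens m = {CE m i | i. mi m i} \<union> {PE m i | i. mi m i}"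

inductive_set J :: "nat \<Rightarrow> fn set" for m where
  J_zero: "(\<lambda>v. 0) \<in> J m"
| J_step: "a \<in> AB m \<Longrightarrow> g \<in> gens m \<Longrightarrow> h \<in> J m \<Longrightarrow> (\<lambda>v. a v * g v + h v) \<in> J m"

definition Lap :: "nat \<Rightarrow> fn \<Rightarrow> fn" where
  "Lap m f = (\<lambda>v. \<Sum>mu\<in>{1..m}. Dt mu (Dt mu f) v)"

definition Lap' :: "nat \<Rightarrow> fn \<Rightarrow> fn" where
  "Lap' m f = (\<lambda>v. \<Sum>a\<in>{2..m}. Dt a (Dt a f) v)"

end

theory Submission
  imports Defs
begin

lemma nosupp: "c \<notin> supp f \<Longrightarrow> f (v(c:=t)) = f v"
  unfolding supp_def by auto

lemma smoothD:
  assumes "smooth f"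
  shows "finite (supp f)" "continuous_on UNIV f"
    "\<And>c v. (\<lambda>t. f (v(c := t))) differentiable (at (v c))" "\<And>c. smooth (pd c f)"
  using assms by (auto elim: smooth.cases)

lemma pd_at: "pd c f (v(c:=t)) = deriv (\<lambda>s. f (v(c:=s))) t"
  by (simp add: pd_def)

lemma smooth_DERIV:
  assumes "smooth f"
  shows "((\<lambda>t. f (v(c:=t))) has_real_derivative pd c f (v(c:=t))) (at t)"
proof -
  have "(\<lambda>s. f ((v(c:=t))(c := s))) differentiable (at ((v(c:=t)) c))"
    using smoothD(3)[OF assms] by blast
  then have "(\<lambda>s. f (v(c := s))) differentiable (at t)" by simp
  then show ?thesis unfolding pd_at DERIV_deriv_iff_real_differentiable[symmetric] .
qed

lemma pd_nosupp: "c \<notin> supp f \<Longrightarrow> pd c f v = 0"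
  unfolding pd_def by (simp add: nosupp)

lemma supp_const[simp]: "supp (\<lambda>v. k) = {}"
  unfolding supp_def by auto

lemma supp_coord: "supp (\<lambda>v. v d) \<subseteq> {d}"
  unfolding supp_def by auto

lemma supp_binop: "supp (\<lambda>v. h (f v) (g v)) \<subseteq> supp f \<union> supp g"
proof (rule subsetI, rule ccontr)
  fix c assume c: "c \<in> supp (\<lambda>v. h (f v) (g v))" "c \<notin> supp f \<union> supp g"
  then have "h (f (v(c:=t))) (g (v(c:=t))) = h (f v) (g v)" for v t by (simp add: nosupp)
  with c(1) show False unfolding supp_def by auto
qed

lemma supp_add: "supp (\<lambda>v. f v + g v) \<subseteq> supp f \<union> supp g"
  by (rule supp_binop)

lemma supp_diff: "supp (\<lambda>v. f v - g v) \<subseteq> supp f \<union> supp g"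
  by (rule supp_binop)

lemma supp_mult: "supp (\<lambda>v. f v * g v) \<subseteq> supp f \<union> supp g"
  by (rule supp_binop)

lemma supp_sum: "supp (\<lambda>v. \<Sum>x\<in>A. F x v) \<subseteq> (\<Union>x\<in>A. supp (F x))"
proof
  fix c assume "c \<in> supp (\<lambda>v. \<Sum>x\<in>A. F x v)"
  then obtain v t where "(\<Sum>x\<in>A. F x (v(c:=t))) \<noteq> (\<Sum>x\<in>A. F x v)" unfolding supp_def by auto
  then obtain x where "x \<in> A" "F x (v(c:=t)) \<noteq> F x v" by (meson sum.cong)
  then show "c \<in> (\<Union>x\<in>A. supp (F x))" unfolding supp_def by auto
qed

lemma supp_pd: "supp (pd c f) \<subseteq> supp f"
proof
  fix d assume d: "d \<in> supp (pd c f)"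
  show "d \<in> supp f"
  proof (rule ccontr)
    assume nd: "d \<notin> supp f"
    have "pd c f (v(d:=t)) = pd c f v" for v t
    proof (cases "d = c")
      case True then show ?thesis using nd pd_nosupp[of c f] by simp
    next
      case False
      have "pd c f (v(d:=t)) = deriv (\<lambda>s. f ((v(d:=t))(c:=s))) ((v(d:=t)) c)"
        by (simp only: pd_def)
      also have "(v(d:=t)) c = v c" using False by simp
      finally have "pd c f (v(d:=t)) = deriv (\<lambda>s. f (v(d:=t,c:=s))) (v c)" .
      also have "(\<lambda>s. f (v(d:=t,c:=s))) = (\<lambda>s. f (v(c:=s)))"
        using False nosupp[OF nd] by (simp add: fun_upd_twist)
      finally show ?thesis by (simp only: pd_def)
    qed
    then show False using d unfolding supp_def by auto
  qed
qed

inductive SC :: "fn \<Rightarrow> bool" where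
  SC_sm: "smooth f \<Longrightarrow> SC f"
| SC_add: "SC f \<Longrightarrow> SC g \<Longrightarrow> SC (\<lambda>v. f v + g v)"
| SC_mult: "SC f \<Longrightarrow> SC g \<Longrightarrow> SC (\<lambda>v. f v * g v)"

lemma SC_props:
  assumes "SC f"
  shows "finite (supp f) \<and> continuous_on UNIV f
     \<and> (\<forall>c v t. ((\<lambda>t. f (v(c:=t))) has_real_derivative pd c f (v(c:=t))) (at t))
     \<and> (\<forall>c. SC (pd c f))"
  using assms
proof induction
  case (SC_sm f)
  then show ?case using smoothD[OF SC_sm] smooth_DERIV[OF SC_sm] SC.SC_sm[OF smoothD(4)[OF SC_sm]] by blast
next
  case (SC_add f g)
  have D: "((\<lambda>t. f (v(c:=t)) + g (v(c:=t))) has_real_derivative pd c f (v(c:=t)) + pd c g (v(c:=t))) (at t)" for c v t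
  proof -
    have "((\<lambda>t. f (v(c:=t))) has_real_derivative pd c f (v(c:=t))) (at t)"
         "((\<lambda>t. g (v(c:=t))) has_real_derivative pd c g (v(c:=t))) (at t)"
      using SC_add.IH by blast+
    then show ?thesis by (rule DERIV_add)
  qed
  have P: "pd c (\<lambda>v. f v + g v) = (\<lambda>v. pd c f v + pd c g v)" for c
  proof
    fix v
    show "pd c (\<lambda>v. f v + g v) v = pd c f v + pd c g v"
      using DERIV_imp_deriv[OF D[where c=c and v=v and t="v c"]] by (simp add: pd_def)
  qed
  have F: "finite (supp (\<lambda>v. f v + g v))" using finite_subset[OF supp_add] SC_add.IH by blast
  have C: "continuous_on UNIV (\<lambda>v. f v + g v)" using SC_add.IH by (intro continuous_intros) blast+
  have S: "SC (pd c (\<lambda>v. f v + g v))" for c unfolding P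
  proof (intro SC.SC_add)
    show "SC (pd c f)" "SC (pd c g)" using SC_add.IH by blast+
  qed
  show ?case using F C S D unfolding P by blast
next
  case (SC_mult f g)
  have D: "((\<lambda>t. f (v(c:=t)) * g (v(c:=t))) has_real_derivative pd c f (v(c:=t)) * g (v(c:=t)) + f (v(c:=t)) * pd c g (v(c:=t))) (at t)" for c v t
  proof -
    have "((\<lambda>t. f (v(c:=t))) has_real_derivative pd c f (v(c:=t))) (at t)"
         "((\<lambda>t. g (v(c:=t))) has_real_derivative pd c g (v(c:=t))) (at t)"
      using SC_mult.IH by blast+
    from DERIV_mult[OF this] show ?thesis by (simp add: mult.commute)
  qed
  have P: "pd c (\<lambda>v. f v * g v) = (\<lambda>v. pd c f v * g v + f v * pd c g v)" for c
  proof
    fix v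
    show "pd c (\<lambda>v. f v * g v) v = pd c f v * g v + f v * pd c g v"
      using DERIV_imp_deriv[OF D[where c=c and v=v and t="v c"]] by (simp add: pd_def)
  qed
  have F: "finite (supp (\<lambda>v. f v * g v))" using finite_subset[OF supp_mult] SC_mult.IH by blast
  have C: "continuous_on UNIV (\<lambda>v. f v * g v)" using SC_mult.IH by (intro continuous_intros) blast+
  have S: "SC (pd c (\<lambda>v. f v * g v))" for c unfolding P
  proof (intro SC.SC_add SC.SC_mult)
    show "SC (pd c f)" "SC (pd c g)" using SC_mult.IH by blast+
    show "SC f" "SC g" by fact+
  qed
  show ?case using F C S D unfolding P by blast
qed

lemma SC_smooth: "SC f \<Longrightarrow> smooth f"
proof (coinduction arbitrary: f rule: smooth.coinduct)
  case (smooth f)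
  note P = SC_props[OF smooth]
  have "(\<lambda>t. f (v(c:=t))) differentiable at (v c)" for c v
  proof -
    have "((\<lambda>t. f (v(c:=t))) has_real_derivative pd c f (v(c:=v c))) (at (v c))" using P by blast
    then show ?thesis using DERIV_deriv_iff_real_differentiable DERIV_imp_deriv by metis
  qed
  then show ?case using P by blast
qed

lemma pd_const[simp]: "pd c (\<lambda>v. k) = (\<lambda>v. 0)"
  by (simp add: pd_def)

lemma pd_coord: "pd c (\<lambda>v. v d) = (\<lambda>v. if c = d then 1 else 0)"
proof
  fix v show "pd c (\<lambda>v. v d) v = (if c = d then 1 else 0)"
  proof (cases "c = d")
    case True
    then have "(\<lambda>t. (v(c:=t)) d) = (\<lambda>t. t)" by auto
    then show ?thesis using True by (simp add: pd_def)
  next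
    case False
    then have "(\<lambda>t. (v(c:=t)) d) = (\<lambda>t. v d)" by auto
    then show ?thesis using False by (simp add: pd_def)
  qed
qed

lemma smooth_coind:
  assumes "Q f"
    and step: "\<And>f. Q f \<Longrightarrow> finite (supp f) \<and> continuous_on UNIV f
          \<and> (\<forall>c v. (\<lambda>t. f (v(c := t))) differentiable (at (v c))) \<and> (\<forall>c. Q (pd c f))"
  shows "smooth f"
  using assms(1)
proof (coinduction arbitrary: f rule: smooth.coinduct)
  case (smooth f)
  then show ?case using step[OF smooth] by blast
qed

lemma smooth_basic: "(\<exists>k. f = (\<lambda>v. k)) \<or> (\<exists>d. f = (\<lambda>v. v d)) \<Longrightarrow> smooth f"
proof (rule smooth_coind[where Q="\<lambda>f. (\<exists>k. f = (\<lambda>v. k)) \<or> (\<exists>d. f = (\<lambda>v. v d))"])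
  fix f :: fn
  assume "(\<exists>k. f = (\<lambda>v. k)) \<or> (\<exists>d. f = (\<lambda>v. v d))"
  then show "finite (supp f) \<and> continuous_on UNIV f
          \<and> (\<forall>c v. (\<lambda>t. f (v(c := t))) differentiable (at (v c))) \<and>
          (\<forall>c. (\<exists>k. pd c f = (\<lambda>v. k)) \<or> (\<exists>d. pd c f = (\<lambda>v. v d)))"
  proof
    assume "\<exists>k. f = (\<lambda>v. k)"
    then obtain k where f: "f = (\<lambda>v. k)" by blast
    have F: "finite (supp f)" unfolding f by simp
    have C: "continuous_on UNIV f" unfolding f by (rule continuous_on_const)
    have D: "(\<lambda>t. f (v(c:=t))) differentiable at (v c)" for c v
      unfolding f by simp
    have S: "\<exists>k. pd c f = (\<lambda>v. k)" for c unfolding f pd_const by blast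
    show ?thesis using F C D S by blast
  next
    assume "\<exists>d. f = (\<lambda>v. v d)"
    then obtain d where f: "f = (\<lambda>v. v d)" by blast
    have F: "finite (supp f)" unfolding f using supp_coord finite_subset by blast
    have C: "continuous_on UNIV f" unfolding f by simp
    have D: "(\<lambda>t. f (v(c:=t))) differentiable at (v c)" for c v
    proof (cases "c = d")
      case True
      then have "(\<lambda>t. f (v(c:=t))) = (\<lambda>t. t)" unfolding f by auto
      then show ?thesis by simp
    next
      case False
      then have "(\<lambda>t. f (v(c:=t))) = (\<lambda>t. v d)" unfolding f by auto
      then show ?thesis by simp
    qed
    have S: "\<exists>k. pd c f = (\<lambda>v. k)" for c unfolding f pd_coord
      by (rule exI[of _ "if c = d then 1 else 0"]) (rule refl)
    show ?thesis using F C D S by blast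
  qed
qed

lemma smooth_const[simp, intro]: "smooth (\<lambda>v. k)"
  by (rule smooth_basic) auto

lemma smooth_coord[simp, intro]: "smooth (\<lambda>v. v d)"
  by (rule smooth_basic) auto

lemma smooth_add[simp, intro]: "smooth f \<Longrightarrow> smooth g \<Longrightarrow> smooth (\<lambda>v. f v + g v)"
  by (rule SC_smooth) (intro SC.intros)

lemma smooth_mult[simp, intro]: "smooth f \<Longrightarrow> smooth g \<Longrightarrow> smooth (\<lambda>v. f v * g v)"
  by (rule SC_smooth) (intro SC.intros)

lemma smooth_diff[simp, intro]: "smooth f \<Longrightarrow> smooth g \<Longrightarrow> smooth (\<lambda>v. f v - g v)"
proof -
  assume "smooth f" "smooth g"
  then have "smooth (\<lambda>v. f v + (\<lambda>v. -1) v * g v)" by (intro smooth_add smooth_mult smooth_const)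
  then show ?thesis by simp
qed

lemma smooth_sum[simp, intro]: "(\<And>x. x \<in> A \<Longrightarrow> smooth (F x)) \<Longrightarrow> smooth (\<lambda>v. \<Sum>x\<in>A. F x v)"
proof (induction A rule: infinite_finite_induct)
  case (insert x A)
  then have "smooth (\<lambda>v. F x v + (\<Sum>x\<in>A. F x v))" by (intro smooth_add) auto
  then show ?case using insert by simp
qed auto

lemma smooth_pd[simp, intro]: "smooth f \<Longrightarrow> smooth (pd c f)"
  by (rule smoothD(4))

lemma smooth_DERIV0: "smooth f \<Longrightarrow> ((\<lambda>t. f (v(c:=t))) has_real_derivative pd c f v) (at (v c))"
  using smooth_DERIV[of f v c "v c"] by (simp only: fun_upd_triv)

lemma pd_add: "smooth f \<Longrightarrow> smooth g \<Longrightarrow> pd c (\<lambda>v. f v + g v) v = pd c f v + pd c g v"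
proof -
  assume f: "smooth f" and g: "smooth g"
  have "((\<lambda>t. f (v(c:=t)) + g (v(c:=t))) has_real_derivative pd c f v + pd c g v) (at (v c))"
    by (intro DERIV_add smooth_DERIV0 f g)
  moreover have "pd c (\<lambda>v. f v + g v) v = deriv (\<lambda>t. f (v(c:=t)) + g (v(c:=t))) (v c)" by (simp only: pd_def)
  ultimately show ?thesis using DERIV_imp_deriv by metis
qed

lemma pd_diff: "smooth f \<Longrightarrow> smooth g \<Longrightarrow> pd c (\<lambda>v. f v - g v) v = pd c f v - pd c g v"
proof -
  assume f: "smooth f" and g: "smooth g"
  have "((\<lambda>t. f (v(c:=t)) - g (v(c:=t))) has_real_derivative pd c f v - pd c g v) (at (v c))"
    by (intro DERIV_diff smooth_DERIV0 f g)
  moreover have "pd c (\<lambda>v. f v - g v) v = deriv (\<lambda>t. f (v(c:=t)) - g (v(c:=t))) (v c)" by (simp only: pd_def)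
  ultimately show ?thesis using DERIV_imp_deriv by metis
qed

lemma pd_mult: "smooth f \<Longrightarrow> smooth g \<Longrightarrow> pd c (\<lambda>v. f v * g v) v = pd c f v * g v + f v * pd c g v"
proof -
  assume f: "smooth f" and g: "smooth g"
  have "((\<lambda>t. f (v(c:=t)) * g (v(c:=t))) has_real_derivative pd c f v * g (v(c:=v c)) + pd c g v * f (v(c:=v c))) (at (v c))"
    by (intro DERIV_mult smooth_DERIV0 f g)
  then have "((\<lambda>t. f (v(c:=t)) * g (v(c:=t))) has_real_derivative pd c f v * g v + f v * pd c g v) (at (v c))"
    by (simp only: fun_upd_triv mult.commute)
  moreover have "pd c (\<lambda>v. f v * g v) v = deriv (\<lambda>t. f (v(c:=t)) * g (v(c:=t))) (v c)" by (simp only: pd_def)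
  ultimately show ?thesis using DERIV_imp_deriv by metis
qed

lemma Dt_superset: "finite S \<Longrightarrow> supp f \<subseteq> S \<Longrightarrow> Dt mu f v = (\<Sum>c\<in>S. tcoef mu c v * pd c f v)"
  unfolding Dt_def by (rule sum.mono_neutral_left) (auto simp: pd_nosupp)

lemma smooth_finite: "smooth f \<Longrightarrow> finite (supp f)"
  by (rule smoothD(1))

lemma Dt_add: "smooth f \<Longrightarrow> smooth g \<Longrightarrow> Dt mu (\<lambda>v. f v + g v) = (\<lambda>v. Dt mu f v + Dt mu g v)"
proof
  fix v assume f: "smooth f" and g: "smooth g"
  let ?S = "supp f \<union> supp g"
  have S: "finite ?S" using f g by (simp add: smooth_finite)
  have "Dt mu (\<lambda>v. f v + g v) v = (\<Sum>c\<in>?S. tcoef mu c v * pd c (\<lambda>v. f v + g v) v)"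
    using S supp_add by (rule Dt_superset)
  also have "\<dots> = (\<Sum>c\<in>?S. tcoef mu c v * pd c f v) + (\<Sum>c\<in>?S. tcoef mu c v * pd c g v)"
    by (simp add: pd_add f g distrib_left sum.distrib)
  also have "\<dots> = Dt mu f v + Dt mu g v"
    by (simp add: Dt_superset[OF S, of f mu v] Dt_superset[OF S, of g mu v])
  finally show "Dt mu (\<lambda>v. f v + g v) v = Dt mu f v + Dt mu g v" .
qed

lemma Dt_diff: "smooth f \<Longrightarrow> smooth g \<Longrightarrow> Dt mu (\<lambda>v. f v - g v) = (\<lambda>v. Dt mu f v - Dt mu g v)"
proof
  fix v assume f: "smooth f" and g: "smooth g"
  let ?S = "supp f \<union> supp g"
  have S: "finite ?S" using f g by (simp add: smooth_finite)
  have "Dt mu (\<lambda>v. f v - g v) v = (\<Sum>c\<in>?S. tcoef mu c v * pd c (\<lambda>v. f v - g v) v)"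
    using S supp_diff by (rule Dt_superset)
  also have "\<dots> = (\<Sum>c\<in>?S. tcoef mu c v * pd c f v) - (\<Sum>c\<in>?S. tcoef mu c v * pd c g v)"
    by (simp add: pd_diff f g right_diff_distrib sum_subtractf)
  also have "\<dots> = Dt mu f v - Dt mu g v"
    by (simp add: Dt_superset[OF S, of f mu v] Dt_superset[OF S, of g mu v])
  finally show "Dt mu (\<lambda>v. f v - g v) v = Dt mu f v - Dt mu g v" .
qed

lemma Dt_mult: "smooth f \<Longrightarrow> smooth g \<Longrightarrow> Dt mu (\<lambda>v. f v * g v) = (\<lambda>v. Dt mu f v * g v + f v * Dt mu g v)"
proof
  fix v assume f: "smooth f" and g: "smooth g"
  let ?S = "supp f \<union> supp g"
  have S: "finite ?S" using f g by (simp add: smooth_finite)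
  have "Dt mu (\<lambda>v. f v * g v) v = (\<Sum>c\<in>?S. tcoef mu c v * pd c (\<lambda>v. f v * g v) v)"
    using S supp_mult by (rule Dt_superset)
  also have "\<dots> = (\<Sum>c\<in>?S. tcoef mu c v * pd c f v) * g v + f v * (\<Sum>c\<in>?S. tcoef mu c v * pd c g v)"
    by (simp add: pd_mult f g distrib_left sum.distrib sum_distrib_left sum_distrib_right mult_ac)
  also have "\<dots> = Dt mu f v * g v + f v * Dt mu g v"
    by (simp add: Dt_superset[OF S, of f mu v] Dt_superset[OF S, of g mu v])
  finally show "Dt mu (\<lambda>v. f v * g v) v = Dt mu f v * g v + f v * Dt mu g v" .
qed

lemma Dt_const[simp]: "Dt mu (\<lambda>v. k) = (\<lambda>v. 0)"
  unfolding Dt_def by simp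

lemma Dt_coord: "Dt mu (\<lambda>v. v c) = (\<lambda>v. tcoef mu c v)"
proof
  fix v
  have "Dt mu (\<lambda>v. v c) v = (\<Sum>c'\<in>{c}. tcoef mu c' v * pd c' (\<lambda>v. v c) v)"
    by (rule Dt_superset) (auto simp: supp_coord)
  then show "Dt mu (\<lambda>v. v c) v = tcoef mu c v" by (simp add: pd_coord)
qed

lemma Dt_sum: "(\<And>x. x \<in> A \<Longrightarrow> smooth (F x)) \<Longrightarrow> Dt mu (\<lambda>v. \<Sum>x\<in>A. F x v) = (\<lambda>v. \<Sum>x\<in>A. Dt mu (F x) v)"
proof (induction A rule: infinite_finite_induct)
  case (insert x A)
  have "Dt mu (\<lambda>v. \<Sum>x\<in>insert x A. F x v) = Dt mu (\<lambda>v. F x v + (\<Sum>x\<in>A. F x v))"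
    using insert by simp
  also have "\<dots> = (\<lambda>v. Dt mu (F x) v + Dt mu (\<lambda>v. \<Sum>x\<in>A. F x v) v)"
    using insert by (intro Dt_add) auto
  finally show ?case using insert by simp
qed auto

lemma smooth_tcoef[simp,intro]: "smooth (tcoef mu c)"
proof (cases c)
  case (X x1)
  have "tcoef mu (X x1) = (\<lambda>v. if x1 = mu then 1 else 0)" by (rule ext) simp
  then show ?thesis using X by simp
next
  case (U x21 x22)
  have "tcoef mu (U x21 x22) = (\<lambda>v. v (U x21 (shift x22 mu)))" by (rule ext) simp
  then show ?thesis using U by simp
next
  case (P x3)
  have "tcoef mu (P x3) = (\<lambda>v. v (P (shift x3 mu)))" by (rule ext) simp
  then show ?thesis using P by simp
qed

lemma Dt_eq: "Dt mu f = (\<lambda>v. \<Sum>c\<in>supp f. tcoef mu c v * pd c f v)"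
  unfolding Dt_def ..

lemma smooth_Dt[simp,intro]: "smooth f \<Longrightarrow> smooth (Dt mu f)"
  unfolding Dt_eq by (intro smooth_sum smooth_mult smooth_tcoef smooth_pd)

lemma clairaut_real:
  fixes g A B AB BA :: "real \<Rightarrow> real \<Rightarrow> real"
  assumes gA: "\<And>s t. DERIV (\<lambda>s. g s t) s :> A s t"
  and gB: "\<And>s t. DERIV (\<lambda>t. g s t) t :> B s t"
  and AAB: "\<And>s t. DERIV (\<lambda>t. A s t) t :> AB s t"
  and BBA: "\<And>s t. DERIV (\<lambda>s. B s t) s :> BA s t"
  and cAB: "continuous_on UNIV (\<lambda>p. AB (fst p) (snd p))"
  and cBA: "continuous_on UNIV (\<lambda>p. BA (fst p) (snd p))"
  shows "AB s0 t0 = BA s0 t0"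
proof (rule ccontr)
  assume ne: "AB s0 t0 \<noteq> BA s0 t0"
  define e where "e = \<bar>AB s0 t0 - BA s0 t0\<bar> / 2"
  have e: "e > 0" using ne by (simp add: e_def)
  obtain d1 where d1: "d1 > 0" "\<And>p. dist p (s0,t0) < d1 \<Longrightarrow> dist (AB (fst p) (snd p)) (AB s0 t0) < e"
    using cAB e unfolding continuous_on_iff by (metis UNIV_I fst_conv snd_conv)
  obtain d2 where d2: "d2 > 0" "\<And>p. dist p (s0,t0) < d2 \<Longrightarrow> dist (BA (fst p) (snd p)) (BA s0 t0) < e"
    using cBA e unfolding continuous_on_iff by (metis UNIV_I fst_conv snd_conv)
  define h where "h = min d1 d2 / 2"
  have h: "h > 0" using d1 d2 by (simp add: h_def)
  have close: "dist (x,y) (s0,t0) < min d1 d2" if "s0 < x" "x < s0 + h" "t0 < y" "y < t0 + h" for x y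
  proof -
    have "dist (x,y) (s0,t0) = sqrt ((dist x s0)\<^sup>2 + (dist y t0)\<^sup>2)" by (rule dist_Pair_Pair)
    also have "\<dots> \<le> \<bar>dist x s0\<bar> + \<bar>dist y t0\<bar>" by (rule sqrt_sum_squares_le_sum_abs)
    also have "\<dots> < 2 * h" using that by (simp add: dist_real_def)
    finally show ?thesis by (simp add: h_def)
  qed
  define \<Delta> where "\<Delta> = g (s0+h) (t0+h) - g (s0+h) t0 - g s0 (t0+h) + g s0 t0"
  have "\<exists>z. s0 < z \<and> z < s0 + h \<and> (g (s0+h) (t0+h) - g (s0+h) t0) - (g s0 (t0+h) - g s0 t0) = (s0 + h - s0) * (A z (t0+h) - A z t0)"
    by (rule MVT2[where f="\<lambda>s. g s (t0+h) - g s t0"]) (use h in simp, intro DERIV_diff gA)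
  then obtain \<xi> where \<xi>: "s0 < \<xi>" "\<xi> < s0 + h"
    "(g (s0+h) (t0+h) - g (s0+h) t0) - (g s0 (t0+h) - g s0 t0) = (s0 + h - s0) * (A \<xi> (t0+h) - A \<xi> t0)"
    by blast
  have "\<exists>z. t0 < z \<and> z < t0 + h \<and> A \<xi> (t0+h) - A \<xi> t0 = (t0 + h - t0) * AB \<xi> z"
    by (rule MVT2[where f="\<lambda>t. A \<xi> t"]) (use h in simp, rule AAB)
  then obtain \<eta> where \<eta>: "t0 < \<eta>" "\<eta> < t0 + h" "A \<xi> (t0+h) - A \<xi> t0 = (t0 + h - t0) * AB \<xi> \<eta>"
    by blast
  have "\<exists>z. t0 < z \<and> z < t0 + h \<and> (g (s0+h) (t0+h) - g s0 (t0+h)) - (g (s0+h) t0 - g s0 t0) = (t0 + h - t0) * (B (s0+h) z - B s0 z)"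
    by (rule MVT2[where f="\<lambda>t. g (s0+h) t - g s0 t"]) (use h in simp, intro DERIV_diff gB)
  then obtain \<eta>' where \<eta>': "t0 < \<eta>'" "\<eta>' < t0 + h"
    "(g (s0+h) (t0+h) - g s0 (t0+h)) - (g (s0+h) t0 - g s0 t0) = (t0 + h - t0) * (B (s0+h) \<eta>' - B s0 \<eta>')"
    by blast
  have "\<exists>z. s0 < z \<and> z < s0 + h \<and> B (s0+h) \<eta>' - B s0 \<eta>' = (s0 + h - s0) * BA z \<eta>'"
    by (rule MVT2[where f="\<lambda>s. B s \<eta>'"]) (use h in simp, rule BBA)
  then obtain \<xi>' where \<xi>': "s0 < \<xi>'" "\<xi>' < s0 + h" "B (s0+h) \<eta>' - B s0 \<eta>' = (s0 + h - s0) * BA \<xi>' \<eta>'"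
    by blast
  have "h * (h * AB \<xi> \<eta>) = h * (h * BA \<xi>' \<eta>')"
    using \<xi>(3) \<eta>(3) \<eta>'(3) \<xi>'(3) by (simp add: algebra_simps)
  then have eq: "AB \<xi> \<eta> = BA \<xi>' \<eta>'" using h by simp
  have "dist (AB \<xi> \<eta>) (AB s0 t0) < e"
    using d1(2)[of "(\<xi>,\<eta>)"] close[OF \<xi>(1,2) \<eta>(1,2)] by simp
  moreover have "dist (BA \<xi>' \<eta>') (BA s0 t0) < e"
    using d2(2)[of "(\<xi>',\<eta>')"] close[OF \<xi>'(1,2) \<eta>'(1,2)] by simp
  ultimately have "\<bar>AB s0 t0 - BA s0 t0\<bar> < 2 * e" using eq by (simp add: dist_real_def)
  then show False by (simp add: e_def)
qed

lemma upd2_c: "c \<noteq> d \<Longrightarrow> (v(c:=s0, d:=t))(c:=s) = v(c:=s, d:=t)"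
  by (simp add: fun_upd_twist)

lemma upd2_d: "(v(c:=s, d:=t0))(d:=t) = v(c:=s, d:=t)"
  by simp

lemma DERIV_upd_c:
  assumes "smooth h" "c \<noteq> d"
  shows "DERIV (\<lambda>s. h (v(c:=s, d:=t))) s :> pd c h (v(c:=s, d:=t))"
  using smooth_DERIV[OF assms(1), of "v(c:=s, d:=t)" c s] by (simp only: upd2_c[OF assms(2)])

lemma DERIV_upd_d:
  assumes "smooth h"
  shows "DERIV (\<lambda>t. h (v(c:=s, d:=t))) t :> pd d h (v(c:=s, d:=t))"
  using smooth_DERIV[OF assms(1), of "v(c:=s, d:=t)" d t] by simp

lemma cont_upd2: "continuous_on UNIV (\<lambda>p::real\<times>real. v(c:=fst p, d:=snd p))"
proof (intro continuous_on_coordinatewise_then_product)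
  fix i
  show "continuous_on UNIV (\<lambda>p::real\<times>real. (v(c:=fst p, d:=snd p)) i)"
    by (cases "i = d"; cases "i = c") (auto intro!: continuous_intros)
qed

lemma cont_comp_upd2: "smooth h \<Longrightarrow> continuous_on UNIV (\<lambda>p::real\<times>real. h (v(c:=fst p, d:=snd p)))"
proof -
  assume sm: "smooth h"
  have "continuous_on (range (\<lambda>p::real\<times>real. v(c:=fst p, d:=snd p))) h"
    using continuous_on_subset[OF smoothD(2)[OF sm]] by blast
  from continuous_on_compose[OF cont_upd2 this] show ?thesis by (simp add: o_def)
qed

lemma clairaut:
  assumes f: "smooth f"
  shows "pd d (pd c f) v = pd c (pd d f) v"
proof (cases "c = d")
  case False
  let ?u = "\<lambda>s t. v(c:=s, d:=t)"
  have "pd d (pd c f) (?u (v c) (v d)) = pd c (pd d f) (?u (v c) (v d))"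
  proof (rule clairaut_real[where g="\<lambda>s t. f (?u s t)" and A="\<lambda>s t. pd c f (?u s t)"
        and B="\<lambda>s t. pd d f (?u s t)" and AB="\<lambda>s t. pd d (pd c f) (?u s t)"
        and BA="\<lambda>s t. pd c (pd d f) (?u s t)"])
    show "DERIV (\<lambda>s. f (?u s t)) s :> pd c f (?u s t)" for s t using DERIV_upd_c[OF f False] .
    show "DERIV (\<lambda>t. f (?u s t)) t :> pd d f (?u s t)" for s t using DERIV_upd_d[OF f] .
    show "DERIV (\<lambda>t. pd c f (?u s t)) t :> pd d (pd c f) (?u s t)" for s t
      using DERIV_upd_d[OF smooth_pd[OF f]] .
    show "DERIV (\<lambda>s. pd d f (?u s t)) s :> pd c (pd d f) (?u s t)" for s t
      using DERIV_upd_c[OF smooth_pd[OF f] False] .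
    show "continuous_on UNIV (\<lambda>p. pd d (pd c f) (?u (fst p) (snd p)))"
      by (intro cont_comp_upd2 smooth_pd f)
    show "continuous_on UNIV (\<lambda>p. pd c (pd d f) (?u (fst p) (snd p)))"
      by (intro cont_comp_upd2 smooth_pd f)
  qed
  then show ?thesis by simp
qed simp

lemma shift_comm: "shift (shift i a) b = shift (shift i b) a"
  by (auto simp: shift_def fun_eq_iff)

lemma Dt_tcoef_sym: "Dt mu (tcoef nu c) = Dt nu (tcoef mu c)"
proof (cases c)
  case (X x1)
  have "tcoef nu (X x1) = (\<lambda>v. if x1 = nu then 1 else 0)" "tcoef mu (X x1) = (\<lambda>v. if x1 = mu then 1 else 0)"
    by (rule ext, simp)+
  then show ?thesis using X by simp
next
  case (U l i)
  have "tcoef nu (U l i) = (\<lambda>v. v (U l (shift i nu)))" "tcoef mu (U l i) = (\<lambda>v. v (U l (shift i mu)))"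
    by (rule ext, simp)+
  then show ?thesis using U by (simp add: Dt_coord shift_comm)
next
  case (P i)
  have "tcoef nu (P i) = (\<lambda>v. v (P (shift i nu)))" "tcoef mu (P i) = (\<lambda>v. v (P (shift i mu)))"
    by (rule ext, simp)+
  then show ?thesis using P by (simp add: Dt_coord shift_comm)
qed

lemma Dt_Dt_expand:
  assumes f: "smooth f"
  shows "Dt mu (Dt nu f) v = (\<Sum>c\<in>supp f. Dt mu (tcoef nu c) v * pd c f v)
     + (\<Sum>c\<in>supp f. \<Sum>c'\<in>supp f. tcoef nu c v * tcoef mu c' v * pd c' (pd c f) v)"
proof -
  let ?S = "supp f"
  have S: "finite ?S" using f by (rule smooth_finite)
  have "Dt mu (Dt nu f) v = Dt mu (\<lambda>v. \<Sum>c\<in>?S. tcoef nu c v * pd c f v) v"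
    by (simp only: Dt_eq[of nu f])
  also have "\<dots> = (\<Sum>c\<in>?S. Dt mu (\<lambda>v. tcoef nu c v * pd c f v) v)"
    by (subst Dt_sum) (auto simp: f)
  also have "\<dots> = (\<Sum>c\<in>?S. Dt mu (tcoef nu c) v * pd c f v + tcoef nu c v * Dt mu (pd c f) v)"
    by (rule sum.cong) (simp_all add: Dt_mult f)
  also have "\<dots> = (\<Sum>c\<in>?S. Dt mu (tcoef nu c) v * pd c f v + tcoef nu c v * (\<Sum>c'\<in>?S. tcoef mu c' v * pd c' (pd c f) v))"
    by (rule sum.cong) (simp_all add: Dt_superset[OF S supp_pd])
  finally show ?thesis by (simp add: sum.distrib sum_distrib_left mult.assoc)
qed

lemma Dt_comm:
  assumes f: "smooth f"
  shows "Dt mu (Dt nu f) = Dt nu (Dt mu f)"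
proof
  fix v
  have "(\<Sum>c\<in>supp f. \<Sum>c'\<in>supp f. tcoef nu c v * tcoef mu c' v * pd c' (pd c f) v)
      = (\<Sum>c'\<in>supp f. \<Sum>c\<in>supp f. tcoef nu c v * tcoef mu c' v * pd c' (pd c f) v)"
    by (rule sum.swap)
  also have "\<dots> = (\<Sum>c'\<in>supp f. \<Sum>c\<in>supp f. tcoef mu c' v * tcoef nu c v * pd c (pd c' f) v)"
    by (simp add: clairaut[OF f] mult.commute)
  finally show "Dt mu (Dt nu f) v = Dt nu (Dt mu f) v"
    by (simp add: Dt_Dt_expand[OF f] Dt_tcoef_sym)
qed

lemma AB_iff: "f \<in> AB m \<longleftrightarrow> smooth f \<and> (\<forall>c\<in>supp f. valid_coord m c)"
  unfolding AB_def using smooth_finite by blast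

lemma AB_smooth: "f \<in> AB m \<Longrightarrow> smooth f" by (simp add: AB_iff)

lemma AB_const[simp,intro]: "(\<lambda>v. k) \<in> AB m" by (simp add: AB_iff)

lemma AB_coord: "valid_coord m c \<Longrightarrow> (\<lambda>v. v c) \<in> AB m"
  using supp_coord[of c] by (auto simp: AB_iff)

lemma AB_add[intro]: "f \<in> AB m \<Longrightarrow> g \<in> AB m \<Longrightarrow> (\<lambda>v. f v + g v) \<in> AB m"
  using supp_add[of f g] by (auto simp: AB_iff)

lemma AB_diff[intro]: "f \<in> AB m \<Longrightarrow> g \<in> AB m \<Longrightarrow> (\<lambda>v. f v - g v) \<in> AB m"
  using supp_diff[of f g] by (auto simp: AB_iff)

lemma AB_mult[intro]: "f \<in> AB m \<Longrightarrow> g \<in> AB m \<Longrightarrow> (\<lambda>v. f v * g v) \<in> AB m"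
  using supp_mult[of f g] by (auto simp: AB_iff)

lemma AB_sum[intro]: "(\<And>x. x \<in> A \<Longrightarrow> F x \<in> AB m) \<Longrightarrow> (\<lambda>v. \<Sum>x\<in>A. F x v) \<in> AB m"
proof -
  assume a: "\<And>x. x \<in> A \<Longrightarrow> F x \<in> AB m"
  have "smooth (\<lambda>v. \<Sum>x\<in>A. F x v)" using a by (intro smooth_sum) (auto simp: AB_iff)
  moreover have "\<forall>c\<in>supp (\<lambda>v. \<Sum>x\<in>A. F x v). valid_coord m c"
    using supp_sum[of F A] a by (force simp: AB_iff)
  ultimately show ?thesis by (simp add: AB_iff)
qed

lemma AB_pd: "f \<in> AB m \<Longrightarrow> pd c f \<in> AB m"
  using supp_pd[of c f] by (auto simp: AB_iff)

lemma mi_shift: "mi m i \<Longrightarrow> mu \<in> {1..m} \<Longrightarrow> mi m (shift i mu)"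
  unfolding mi_def shift_def by auto

lemma mi_zero: "mi m (\<lambda>_. 0)" unfolding mi_def by auto

lemma mi_unit: "mu \<in> {1..m} \<Longrightarrow> mi m (unit mu)"
  unfolding unit_def by (intro mi_shift mi_zero)

lemma AB_tcoef: "mu \<in> {1..m} \<Longrightarrow> valid_coord m c \<Longrightarrow> tcoef mu c \<in> AB m"
proof (cases c)
  case (X x1)
  have "tcoef mu (X x1) = (\<lambda>v. if x1 = mu then 1 else 0)" by (rule ext) simp
  then show ?thesis using X by simp
next
  case (U l i)
  assume mu: "mu \<in> {1..m}" and vc: "valid_coord m c"
  have "tcoef mu (U l i) = (\<lambda>v. v (U l (shift i mu)))" by (rule ext) simp
  moreover have "valid_coord m (U l (shift i mu))" using vc U mu mi_shift by (auto simp: valid_coord_def)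
  ultimately show ?thesis using U AB_coord by simp
next
  case (P i)
  assume mu: "mu \<in> {1..m}" and vc: "valid_coord m c"
  have "tcoef mu (P i) = (\<lambda>v. v (P (shift i mu)))" by (rule ext) simp
  moreover have "valid_coord m (P (shift i mu))" using vc P mu mi_shift by (auto simp: valid_coord_def)
  ultimately show ?thesis using P AB_coord by simp
qed

lemma AB_Dt: "f \<in> AB m \<Longrightarrow> mu \<in> {1..m} \<Longrightarrow> Dt mu f \<in> AB m"
  unfolding Dt_eq
  by (intro AB_sum AB_mult AB_tcoef AB_pd) (auto simp: AB_iff)

definition FL :: "nat list \<Rightarrow> (nat \<Rightarrow> nat) \<Rightarrow> fn \<Rightarrow> fn" where
  "FL L i f = foldr (\<lambda>mu g. (Dt mu ^^ i mu) g) L f"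

lemma FL_Nil[simp]: "FL [] i f = f" by (simp add: FL_def)
lemma FL_Cons[simp]: "FL (nu # L) i f = (Dt nu ^^ i nu) (FL L i f)" by (simp add: FL_def)

lemma smooth_funpow: "smooth f \<Longrightarrow> smooth ((Dt nu ^^ n) f)"
  by (induction n) auto

lemma AB_funpow: "f \<in> AB m \<Longrightarrow> nu \<in> {1..m} \<Longrightarrow> (Dt nu ^^ n) f \<in> AB m"
  by (induction n) (auto intro: AB_Dt)

lemma smooth_FL: "smooth f \<Longrightarrow> smooth (FL L i f)"
  by (induction L) (auto intro: smooth_funpow)

lemma AB_FL: "f \<in> AB m \<Longrightarrow> set L \<subseteq> {1..m} \<Longrightarrow> FL L i f \<in> AB m"
  by (induction L) (auto intro: AB_funpow)

lemma Dt_funpow: "smooth f \<Longrightarrow> Dt mu ((Dt nu ^^ n) f) = (Dt nu ^^ n) (Dt mu f)"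
proof (induction n)
  case (Suc n)
  have "Dt mu ((Dt nu ^^ Suc n) f) = Dt mu (Dt nu ((Dt nu ^^ n) f))" by simp
  also have "\<dots> = Dt nu (Dt mu ((Dt nu ^^ n) f))" using Dt_comm smooth_funpow Suc.prems by metis
  also have "\<dots> = (Dt nu ^^ Suc n) (Dt mu f)" using Suc by simp
  finally show ?case .
qed simp

lemma Dt_FL: "smooth f \<Longrightarrow> Dt mu (FL L i f) = FL L i (Dt mu f)"
  by (induction L) (auto simp: Dt_funpow smooth_FL)

lemma FL_cong: "(\<And>x. x \<in> set L \<Longrightarrow> i x = j x) \<Longrightarrow> FL L i f = FL L j f"
  by (induction L) auto

lemma FL_shift: "distinct L \<Longrightarrow> mu \<in> set L \<Longrightarrow> smooth f \<Longrightarrow> FL L (shift i mu) f = Dt mu (FL L i f)"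
proof (induction L)
  case (Cons nu L)
  show ?case
  proof (cases "nu = mu")
    case True
    then have nin: "mu \<notin> set L" using Cons by auto
    have "FL L (shift i mu) f = FL L i f" by (rule FL_cong) (use nin in \<open>auto simp: shift_def\<close>)
    moreover have "shift i mu mu = Suc (i mu)" by (simp add: shift_def)
    ultimately show ?thesis using True by simp
  next
    case False
    then have "FL L (shift i mu) f = Dt mu (FL L i f)" using Cons by auto
    moreover have "shift i mu nu = i nu" using False by (simp add: shift_def)
    ultimately show ?thesis using False Cons.prems
      by (simp add: Dt_funpow smooth_FL)
  qed
qed simp

lemma Dmi_FL: "Dmi m i f = FL [1..<Suc m] i f"
  unfolding Dmi_def FL_def ..

lemma Dt_Dmi: "mu \<in> {1..m} \<Longrightarrow> smooth f \<Longrightarrow> Dt mu (Dmi m i f) = Dmi m (shift i mu) f"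
  unfolding Dmi_FL by (subst FL_shift) auto

lemma AB_Dmi: "f \<in> AB m \<Longrightarrow> Dmi m i f \<in> AB m"
  unfolding Dmi_FL by (rule AB_FL) auto

definition QQ :: "nat \<Rightarrow> fn" where
  "QQ m = (\<lambda>w. \<Sum>lam\<in>{1..m}. \<Sum>mu\<in>{1..m}. w (U lam (unit mu)) * w (U mu (unit lam)))"

lemma PE_eq: "PE m i = (\<lambda>v. (\<Sum>mu\<in>{1..m}. v (P (shift (shift i mu) mu))) + Dmi m i (QQ m) v)"
  unfolding PE_def QQ_def ..

lemma AB_QQ: "QQ m \<in> AB m"
  unfolding QQ_def
  by (intro AB_sum AB_mult AB_coord) (auto simp: valid_coord_def mi_unit)

lemma AB_CE: "mi m i \<Longrightarrow> CE m i \<in> AB m"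
  unfolding CE_def by (intro AB_sum AB_coord) (auto simp: valid_coord_def mi_shift)

lemma AB_PE: "mi m i \<Longrightarrow> PE m i \<in> AB m"
  unfolding PE_eq by (intro AB_add AB_sum AB_coord AB_Dmi AB_QQ) (auto simp: valid_coord_def mi_shift)

lemma Dt_CE: "mu \<in> {1..m} \<Longrightarrow> Dt mu (CE m i) = CE m (shift i mu)"
proof -
  have "Dt mu (CE m i) = (\<lambda>v. \<Sum>nu\<in>{1..m}. Dt mu (\<lambda>v. v (U nu (shift i nu))) v)"
    unfolding CE_def by (rule Dt_sum) simp
  also have "\<dots> = (\<lambda>v. \<Sum>nu\<in>{1..m}. v (U nu (shift (shift i nu) mu)))"
    by (simp add: Dt_coord)
  also have "\<dots> = CE m (shift i mu)"
    unfolding CE_def by (simp add: shift_comm[of i _ mu])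
  finally show ?thesis .
qed

lemma Dt_PE: "mu \<in> {1..m} \<Longrightarrow> Dt mu (PE m i) = PE m (shift i mu)"
proof -
  assume mu: "mu \<in> {1..m}"
  have sQ: "smooth (QQ m)" using AB_QQ by (rule AB_smooth)
  have "Dt mu (PE m i) = (\<lambda>v. Dt mu (\<lambda>v. \<Sum>nu\<in>{1..m}. v (P (shift (shift i nu) nu))) v + Dt mu (Dmi m i (QQ m)) v)"
    unfolding PE_eq by (rule Dt_add) (auto intro: smooth_FL sQ simp: Dmi_FL)
  also have "\<dots> = (\<lambda>v. (\<Sum>nu\<in>{1..m}. Dt mu (\<lambda>v. v (P (shift (shift i nu) nu))) v) + Dmi m (shift i mu) (QQ m) v)"
    by (simp add: Dt_sum Dt_Dmi[OF mu sQ])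
  also have "\<dots> = (\<lambda>v. (\<Sum>nu\<in>{1..m}. v (P (shift (shift (shift i nu) nu) mu))) + Dmi m (shift i mu) (QQ m) v)"
    by (simp add: Dt_coord)
  also have "\<dots> = PE m (shift i mu)"
    unfolding PE_eq by (simp add: shift_comm[of "shift i _" _ mu] shift_comm[of i _ mu])
  finally show ?thesis .
qed

lemma gens_AB: "g \<in> gens m \<Longrightarrow> g \<in> AB m"
  unfolding gens_def using AB_CE AB_PE by auto

lemma Dt_gens: "g \<in> gens m \<Longrightarrow> mu \<in> {1..m} \<Longrightarrow> Dt mu g \<in> gens m"
  unfolding gens_def using Dt_CE Dt_PE mi_shift by auto

lemma J_AB: "f \<in> J m \<Longrightarrow> f \<in> AB m"
  apply (induction rule: J.induct)
   apply simp
  apply (rule AB_add)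
   apply (rule AB_mult)
    apply assumption
   apply (erule gens_AB)
  apply assumption
  done

lemma J_add: "f \<in> J m \<Longrightarrow> g \<in> J m \<Longrightarrow> (\<lambda>v. f v + g v) \<in> J m"
proof (induction rule: J.induct)
  case J_zero then show ?case by simp
next
  case (J_step a g' h)
  have "(\<lambda>v. a v * g' v + (h v + g v)) \<in> J m" using J_step by (intro J.J_step) auto
  then show ?case by (simp add: add.assoc)
qed


lemma J_mult: "f \<in> J m \<Longrightarrow> a \<in> AB m \<Longrightarrow> (\<lambda>v. a v * f v) \<in> J m"
proof (induction rule: J.induct)
  case J_zero then show ?case using J.J_zero by simp
next
  case (J_step b g h)
  have "(\<lambda>v. (\<lambda>v. a v * b v) v * g v + (\<lambda>v. a v * h v) v) \<in> J m"
    using J_step by (intro J.J_step AB_mult) auto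
  then show ?case by (simp add: algebra_simps)
qed

lemma J_gen: "g \<in> gens m \<Longrightarrow> g \<in> J m"
  using J.J_step[OF AB_const[of 1] _ J.J_zero] by simp

lemma J_Dt: "f \<in> J m \<Longrightarrow> mu \<in> {1..m} \<Longrightarrow> Dt mu f \<in> J m"
proof (induction rule: J.induct)
  case J_zero then show ?case using J.J_zero by simp
next
  case (J_step a g h)
  have sa: "smooth a" "smooth g" "smooth h" using J_step by (auto intro: AB_smooth gens_AB J_AB)
  have eq: "Dt mu (\<lambda>v. a v * g v + h v) = (\<lambda>v. (Dt mu a v * g v + a v * Dt mu g v) + Dt mu h v)"
    using sa by (simp add: Dt_add Dt_mult)
  have 1: "(\<lambda>v. Dt mu a v * g v) \<in> J m"
    by (rule J_mult[OF J_gen[OF J_step(2)] AB_Dt[OF J_step(1) J_step(5)]])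
  have 2: "(\<lambda>v. a v * Dt mu g v) \<in> J m"
    by (rule J_mult[OF J_gen[OF Dt_gens[OF J_step(2) J_step(5)]] J_step(1)])
  have "(\<lambda>v. (Dt mu a v * g v + a v * Dt mu g v) + Dt mu h v) \<in> J m"
    by (intro J_add 1 2 J_step(4) J_step(5))
  then show ?case by (simp only: eq)
qed

lemma J_cmult: "f \<in> J m \<Longrightarrow> (\<lambda>v. k * f v) \<in> J m"
  using J_mult[of f m "\<lambda>v. k"] by simp

lemma J_diff: "f \<in> J m \<Longrightarrow> g \<in> J m \<Longrightarrow> (\<lambda>v. f v - g v) \<in> J m"
  using J_add[OF _ J_cmult[of g m "-1"], of f] by simp

lemma J_eq: "f \<in> J m \<Longrightarrow> (\<And>v. f v = g v) \<Longrightarrow> g \<in> J m"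
proof -
  assume "f \<in> J m" "\<And>v. f v = g v"
  moreover then have "f = g" by auto
  ultimately show ?thesis by simp
qed

lemma smooth_uc[simp,intro]: "smooth (uc l n)" by (simp add: uc_def)

lemma Dt_uc[simp]: "Dt mu (uc l n) = (\<lambda>v. v (U l (shift (unit n) mu)))"
  by (simp add: uc_def Dt_coord)

lemma Dt_coordU[simp]: "Dt mu (\<lambda>v. v (U l i)) = (\<lambda>v. v (U l (shift i mu)))"
  by (simp add: Dt_coord)

lemma unit_comm: "shift (unit x) y = shift (unit y) x"
  unfolding unit_def by (rule shift_comm)

lemma sum_split1: "2 \<le> (m::nat) \<Longrightarrow> (\<Sum>mu\<in>{1..m}. F mu) = F 1 + (\<Sum>mu\<in>{2..m}. (F mu :: real))"
proof -
  assume m: "2 \<le> m"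
  have "{1..m} = insert 1 {2..m}" using m by auto
  then show ?thesis by simp
qed

lemma ident_I:
  assumes s: "smooth cu" "smooth cp1" "smooth c0" and m: "2 \<le> m"
  shows "Dt 1 c0 v + Dt a cu v + 2 * (Dt a (\<lambda>w. \<Sum>b\<in>{2..m}. uc b b w * cp1 w) v + (\<Sum>b\<in>{2..m}. Dt b (\<lambda>w. uc b a w * cp1 w) v))
   = (Dt a cu v + 2 * ((\<Sum>mu\<in>{1..m}. uc mu a v * Dt mu cp1 v) + Dt a (\<lambda>w. \<Sum>b\<in>{2..m}. uc b b w * cp1 w) v))
     + Dt 1 (\<lambda>v. c0 v - 2 * uc 1 a v * cp1 v) v + 2 * cp1 v * CE m (unit a) v"
proof -
  have A: "(\<Sum>b\<in>{2..m}. Dt b (\<lambda>w. uc b a w * cp1 w) v) = 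
     (\<Sum>b\<in>{2..m}. v (U b (shift (unit a) b)) * cp1 v) + (\<Sum>b\<in>{2..m}. uc b a v * Dt b cp1 v)"
    using s by (simp add: Dt_mult sum.distrib)
  have B: "(\<Sum>mu\<in>{1..m}. uc mu a v * Dt mu cp1 v) = uc 1 a v * Dt 1 cp1 v + (\<Sum>b\<in>{2..m}. uc b a v * Dt b cp1 v)"
    using m by (rule sum_split1)
  have C: "CE m (unit a) v = v (U 1 (shift (unit a) 1)) + (\<Sum>b\<in>{2..m}. v (U b (shift (unit a) b)))"
    unfolding CE_def using m by (rule sum_split1)
  have D: "Dt 1 (\<lambda>v. c0 v - 2 * uc 1 a v * cp1 v) v = Dt 1 c0 v - 2 * (v (U 1 (shift (unit a) 1)) * cp1 v + uc 1 a v * Dt 1 cp1 v)"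
    using s by (simp add: Dt_mult Dt_diff algebra_simps)
  show ?thesis unfolding A B C D by (simp add: algebra_simps sum_distrib_left sum_distrib_right)
qed

lemma ident_II:
  assumes s: "smooth cu" "smooth cp1" and m: "2 \<le> m"
  shows "2 * (\<Sum>mu\<in>{1..m}. uc mu 1 v * Dt mu (Dt a cp1) v - uc mu a v * Dt mu (Dt 1 cp1) v)
   = Dt a (\<lambda>v. Dt 1 cu v + 2 * (\<Sum>b\<in>{2..m}. Dt b (\<lambda>w. uc b 1 w * cp1 w) v)) v
     - Dt 1 (\<lambda>v. Dt a cu v + 2 * ((\<Sum>mu\<in>{1..m}. uc mu a v * Dt mu cp1 v) + Dt a (\<lambda>w. \<Sum>b\<in>{2..m}. uc b b w * cp1 w) v)) v
     + 2 * CE m (unit a) v * Dt 1 cp1 v + 2 * CE m (\<lambda>_. 0) v * Dt a (Dt 1 cp1) v"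
proof -
  have cu: "Dt a (Dt (Suc 0) cu) = Dt (Suc 0) (Dt a cu)" using s(1) by (rule Dt_comm)
  have R1: "Dt (Suc 0) (Dt x cp1) = Dt x (Dt (Suc 0) cp1)" for x using s(2) by (rule Dt_comm)
  have R2: "Dt x (Dt a cp1) = Dt a (Dt x cp1)" for x using s(2) by (rule Dt_comm)
  have u1: "shift (unit (Suc 0)) x = shift (unit x) (Suc 0)" for x by (rule unit_comm)
  have u2: "shift (unit x) a = shift (unit a) x" for x by (rule unit_comm)
  have u3: "shift (shift (unit x) (Suc 0)) a = shift (shift (unit x) a) (Suc 0)" for x by (rule shift_comm)
  have z: "shift (\<lambda>_. 0) x = unit x" for x by (simp add: unit_def)
  show ?thesis
    unfolding sum_split1[OF m] CE_def
    using s apply (simp add: Dt_add Dt_mult Dt_sum Dt_diff sum.distrib cu)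
    apply (simp only: R1 R2 u1 u2 u3 z uc_def)
    apply (simp add: algebra_simps sum_distrib_right sum_distrib_left sum_subtractf sum.distrib)
    done
qed


theorem lemma2:
  fixes m :: nat and cu cp0 cp1 :: fn and chi :: "nat \<Rightarrow> nat \<Rightarrow> fn"
  assumes m2: "m \<ge> 2"
    and AB: "cu \<in> AB m" "cp0 \<in> AB m" "cp1 \<in> AB m"
            "\<And>k a. a \<in> {2..m} \<Longrightarrow> chi k a \<in> AB m"
    and fin: "finite {(k, a). a \<in> {2..m} \<and> chi k a \<notin> J m}"
  shows
   "((\<lambda>v. Dt 1 cu v + 2 * (\<Sum>a\<in>{2..m}. Dt a (\<lambda>w. uc a 1 w * cp1 w) v)) \<in> J m
     \<and> (\<forall>k. \<forall>a\<in>{2..m}.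
          (\<lambda>v. Dt 1 (chi k a) v
             + (if k = 0 then Dt a cu v else 0)
             + (if k = 0 then 0 else chi (k - 1) a v)
             + 2 * ((if k = 0 then Dt a (\<lambda>w. \<Sum>b\<in>{2..m}. uc b b w * cp1 w) v else 0)
                    - (if k = 1 then uc 1 a v * cp1 v else 0)
                    + (if k = 0 then (\<Sum>b\<in>{2..m}. Dt b (\<lambda>w. uc b a w * cp1 w) v) else 0)))
          \<in> J m)
     \<and> (\<lambda>v. Dt 1 cp0 v - Lap' m cp1 v) \<in> J m
     \<and> (\<lambda>v. Dt 1 cp1 v + cp0 v) \<in> J m)
   \<longleftrightarrow>
    ((\<forall>a\<in>{2..m}. (\<lambda>v. chi 0 a v - 2 * uc 1 a v * cp1 v) \<in> J m)
     \<and> (\<forall>k\<ge>1. \<forall>a\<in>{2..m}. chi k a \<in> J m)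
     \<and> (\<lambda>v. cp0 v + Dt 1 cp1 v) \<in> J m
     \<and> Lap m cp1 \<in> J m
     \<and> (\<forall>a\<in>{2..m}.
          (\<lambda>v. \<Sum>mu\<in>{1..m}. uc mu 1 v * Dt mu (Dt a cp1) v - uc mu a v * Dt mu (Dt 1 cp1) v)
          \<in> J m)
     \<and> (\<lambda>v. Dt 1 cu v + 2 * (\<Sum>a\<in>{2..m}. Dt a (\<lambda>w. uc a 1 w * cp1 w) v)) \<in> J m
     \<and> (\<forall>a\<in>{2..m}.
          (\<lambda>v. Dt a cu v + 2 * ((\<Sum>mu\<in>{1..m}. uc mu a v * Dt mu cp1 v)
                                 + Dt a (\<lambda>w. \<Sum>b\<in>{2..m}. uc b b w * cp1 w) v))
          \<in> J m))"
proof -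
  have scu: "smooth cu" using AB(1) by (rule AB_smooth)
  have scp0: "smooth cp0" using AB(2) by (rule AB_smooth)
  have scp1: "smooth cp1" using AB(3) by (rule AB_smooth)
  have schi: "smooth (chi k a)" if "a \<in> {2..m}" for k a using AB(4)[OF that] by (rule AB_smooth)
  have one: "(1::nat) \<in> {1..m}" using m2 by simp
  have aM: "a \<in> {1..m}" if "a \<in> {2..m}" for a using that by simp
  have CE0J: "CE m (\<lambda>_. 0) \<in> J m" by (rule J_gen) (auto simp: gens_def mi_zero)
  have CEaJ: "CE m (unit a) \<in> J m" if "a \<in> {2..m}" for a
    by (rule J_gen) (use that mi_unit[of a m] in \<open>auto simp: gens_def\<close>)
  have Lap_eq: "Lap m f v = Dt 1 (Dt 1 f) v + Lap' m f v" for f v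
    unfolding Lap_def Lap'_def sum_split1[OF m2] ..
  have ABcp1: "(\<lambda>v. k * cp1 v) \<in> AB m" for k using AB(3) by auto
  have ABD1cp1: "Dt 1 cp1 \<in> AB m" by (rule AB_Dt[OF AB(3) one])
  have ABDaD1cp1: "Dt a (Dt 1 cp1) \<in> AB m" if "a \<in> {2..m}" for a by (rule AB_Dt[OF ABD1cp1 aM[OF that]])
  define E2 where "E2 = (\<lambda>k a v. Dt 1 (chi k a) v
             + (if k = 0 then Dt a cu v else 0)
             + (if k = 0 then 0 else chi (k - 1) a v)
             + 2 * ((if k = 0 then Dt a (\<lambda>w. \<Sum>b\<in>{2..m}. uc b b w * cp1 w) v else 0)
                    - (if k = 1 then uc 1 a v * cp1 v else 0)
                    + (if k = 0 then (\<Sum>b\<in>{2..m}. Dt b (\<lambda>w. uc b a w * cp1 w) v) else 0)))"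
  define G1 where "G1 = (\<lambda>a v. chi 0 a v - 2 * uc 1 a v * cp1 v)"
  define G7 where "G7 = (\<lambda>a v. Dt a cu v + 2 * ((\<Sum>mu\<in>{1..m}. uc mu a v * Dt mu cp1 v)
                                 + Dt a (\<lambda>w. \<Sum>b\<in>{2..m}. uc b b w * cp1 w) v))"
  define G6 where "G6 = (\<lambda>v. Dt 1 cu v + 2 * (\<Sum>a\<in>{2..m}. Dt a (\<lambda>w. uc a 1 w * cp1 w) v))"
  have E2_1: "E2 1 a v = Dt 1 (chi 1 a) v + G1 a v" for a v
    unfolding E2_def G1_def by simp
  have E2_k: "E2 k a v = Dt 1 (chi k a) v + chi (k - 1) a v" if "k \<ge> 2" for k a v
    unfolding E2_def using that by simp
  have I: "E2 0 a v = G7 a v + Dt 1 (G1 a) v + 2 * cp1 v * CE m (unit a) v" if "a \<in> {2..m}" for a v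
  proof -
    have "E2 0 a v = Dt 1 (chi 0 a) v + Dt a cu v + 2 * (Dt a (\<lambda>w. \<Sum>b\<in>{2..m}. uc b b w * cp1 w) v
        + (\<Sum>b\<in>{2..m}. Dt b (\<lambda>w. uc b a w * cp1 w) v))"
      unfolding E2_def by simp
    also have "\<dots> = G7 a v + Dt 1 (G1 a) v + 2 * cp1 v * CE m (unit a) v"
      unfolding G7_def G1_def by (rule ident_I[OF scu scp1 schi[OF that] m2])
    finally show ?thesis .
  qed
  have II: "2 * (\<Sum>mu\<in>{1..m}. uc mu 1 v * Dt mu (Dt a cp1) v - uc mu a v * Dt mu (Dt 1 cp1) v)
     = Dt a G6 v - Dt 1 (G7 a) v + 2 * CE m (unit a) v * Dt 1 cp1 v + 2 * CE m (\<lambda>_. 0) v * Dt a (Dt 1 cp1) v" for a v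
    unfolding G6_def G7_def by (rule ident_II[OF scu scp1 m2])
  have G1J_from: "G1 a \<in> J m" if "E2 1 a \<in> J m" "chi 1 a \<in> J m" "a \<in> {2..m}" for a
  proof (rule J_eq[OF J_diff[OF that(1) J_Dt[OF that(2) one]]])
    fix v show "E2 1 a v - Dt 1 (chi 1 a) v = G1 a v" using E2_1[where a=a and v=v] by linarith
  qed
  have E2_eq: "(\<lambda>v. Dt 1 (chi k a) v
             + (if k = 0 then Dt a cu v else 0)
             + (if k = 0 then 0 else chi (k - 1) a v)
             + 2 * ((if k = 0 then Dt a (\<lambda>w. \<Sum>b\<in>{2..m}. uc b b w * cp1 w) v else 0)
                    - (if k = 1 then uc 1 a v * cp1 v else 0)
                    + (if k = 0 then (\<Sum>b\<in>{2..m}. Dt b (\<lambda>w. uc b a w * cp1 w) v) else 0))) = E2 k a" for k a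
    unfolding E2_def ..
  show ?thesis
    unfolding E2_eq
  proof
    assume L: "(\<lambda>v. Dt 1 cu v + 2 * (\<Sum>a\<in>{2..m}. Dt a (\<lambda>w. uc a 1 w * cp1 w) v)) \<in> J m
     \<and> (\<forall>k. \<forall>a\<in>{2..m}. E2 k a \<in> J m)
     \<and> (\<lambda>v. Dt 1 cp0 v - Lap' m cp1 v) \<in> J m
     \<and> (\<lambda>v. Dt 1 cp1 v + cp0 v) \<in> J m"
    then have L1: "G6 \<in> J m" and L2: "\<And>k a. a \<in> {2..m} \<Longrightarrow> E2 k a \<in> J m"
      and L3: "(\<lambda>v. Dt 1 cp0 v - Lap' m cp1 v) \<in> J m" and L4: "(\<lambda>v. Dt 1 cp1 v + cp0 v) \<in> J m"
      unfolding G6_def by blast+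
    obtain K where K: "fst ` {(k, a). a \<in> {2..m} \<and> chi k a \<notin> J m} \<subseteq> {..<K}"
      using finite_nat_bounded[OF finite_imageI[OF fin]] by blast
    have big: "chi k a \<in> J m" if "k \<ge> K" "a \<in> {2..m}" for k a
    proof (rule ccontr)
      assume "chi k a \<notin> J m"
      then have "k \<in> fst ` {(k, a). a \<in> {2..m} \<and> chi k a \<notin> J m}" using that(2) by force
      then show False using K that(1) by auto
    qed
    have down: "\<forall>k a. 1 \<le> k \<longrightarrow> K \<le> k + n \<longrightarrow> a \<in> {2..m} \<longrightarrow> chi k a \<in> J m" for n
    proof (induction n)
      case 0 then show ?case using big by simp
    next
      case (Suc n)
      show ?case
      proof (intro allI impI)
        fix k a assume k: "1 \<le> k" "K \<le> k + Suc n" and a: "a \<in> {2..m}"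
        have c1: "chi (Suc k) a \<in> J m" using Suc.IH k a by auto
        have "(\<lambda>v. E2 (Suc k) a v - Dt 1 (chi (Suc k) a) v) \<in> J m"
          by (rule J_diff[OF L2[OF a] J_Dt[OF c1 one]])
        then show "chi k a \<in> J m" by (rule J_eq) (use k in \<open>simp add: E2_k\<close>)
      qed
    qed
    have R2: "chi k a \<in> J m" if "k \<ge> 1" "a \<in> {2..m}" for k a
      using down[of K] that by auto
    have R1: "G1 a \<in> J m" if "a \<in> {2..m}" for a
      by (rule G1J_from[OF L2[OF that] R2[OF _ that] that]) simp
    have R7: "G7 a \<in> J m" if a: "a \<in> {2..m}" for a
    proof -
      have "(\<lambda>v. (E2 0 a v - Dt 1 (G1 a) v) - (\<lambda>v. 2 * cp1 v) v * CE m (unit a) v) \<in> J m"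
        by (intro J_diff L2 a J_Dt R1 one J_mult CEaJ ABcp1)
      then show ?thesis by (rule J_eq) (simp add: I[OF a])
    qed
    have R5: "(\<lambda>v. \<Sum>mu\<in>{1..m}. uc mu 1 v * Dt mu (Dt a cp1) v - uc mu a v * Dt mu (Dt 1 cp1) v) \<in> J m"
      if a: "a \<in> {2..m}" for a
    proof -
      have "(\<lambda>v. (\<lambda>v. 1/2) v * (Dt a G6 v - Dt 1 (G7 a) v) + (Dt 1 cp1 v * CE m (unit a) v + Dt a (Dt 1 cp1) v * CE m (\<lambda>_. 0) v)) \<in> J m"
        by (intro J_add J_mult J_diff J_Dt L1 R7 a aM one CEaJ CE0J ABD1cp1 ABDaD1cp1 AB_const)
      then show ?thesis
      proof (rule J_eq)
        fix v show "1/2 * (Dt a G6 v - Dt 1 (G7 a) v) + (Dt 1 cp1 v * CE m (unit a) v + Dt a (Dt 1 cp1) v * CE m (\<lambda>_. 0) v)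
          = (\<Sum>mu\<in>{1..m}. uc mu 1 v * Dt mu (Dt a cp1) v - uc mu a v * Dt mu (Dt 1 cp1) v)"
          using II[where a=a and v=v] by (simp add: algebra_simps)
      qed
    qed
    have R3: "(\<lambda>v. cp0 v + Dt 1 cp1 v) \<in> J m"
      by (rule J_eq[OF L4]) simp
    have R4: "Lap m cp1 \<in> J m"
    proof -
      have "(\<lambda>v. Dt 1 (\<lambda>v. Dt 1 cp1 v + cp0 v) v - (Dt 1 cp0 v - Lap' m cp1 v)) \<in> J m"
        by (intro J_diff J_Dt L4 L3 one)
      then show ?thesis by (rule J_eq) (simp add: Dt_add scp0 scp1 Lap_eq)
    qed
    show "(\<forall>a\<in>{2..m}. (\<lambda>v. chi 0 a v - 2 * uc 1 a v * cp1 v) \<in> J m)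
     \<and> (\<forall>k\<ge>1. \<forall>a\<in>{2..m}. chi k a \<in> J m)
     \<and> (\<lambda>v. cp0 v + Dt 1 cp1 v) \<in> J m
     \<and> Lap m cp1 \<in> J m
     \<and> (\<forall>a\<in>{2..m}.
          (\<lambda>v. \<Sum>mu\<in>{1..m}. uc mu 1 v * Dt mu (Dt a cp1) v - uc mu a v * Dt mu (Dt 1 cp1) v)
          \<in> J m)
     \<and> (\<lambda>v. Dt 1 cu v + 2 * (\<Sum>a\<in>{2..m}. Dt a (\<lambda>w. uc a 1 w * cp1 w) v)) \<in> J m
     \<and> (\<forall>a\<in>{2..m}.
          (\<lambda>v. Dt a cu v + 2 * ((\<Sum>mu\<in>{1..m}. uc mu a v * Dt mu cp1 v)
                                 + Dt a (\<lambda>w. \<Sum>b\<in>{2..m}. uc b b w * cp1 w) v))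
          \<in> J m)"
      using R1 R2 R3 R4 R5 L1 R7 unfolding G1_def G6_def G7_def by blast
  next
    assume R: "(\<forall>a\<in>{2..m}. (\<lambda>v. chi 0 a v - 2 * uc 1 a v * cp1 v) \<in> J m)
     \<and> (\<forall>k\<ge>1. \<forall>a\<in>{2..m}. chi k a \<in> J m)
     \<and> (\<lambda>v. cp0 v + Dt 1 cp1 v) \<in> J m
     \<and> Lap m cp1 \<in> J m
     \<and> (\<forall>a\<in>{2..m}.
          (\<lambda>v. \<Sum>mu\<in>{1..m}. uc mu 1 v * Dt mu (Dt a cp1) v - uc mu a v * Dt mu (Dt 1 cp1) v)
          \<in> J m)
     \<and> (\<lambda>v. Dt 1 cu v + 2 * (\<Sum>a\<in>{2..m}. Dt a (\<lambda>w. uc a 1 w * cp1 w) v)) \<in> J m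
     \<and> (\<forall>a\<in>{2..m}.
          (\<lambda>v. Dt a cu v + 2 * ((\<Sum>mu\<in>{1..m}. uc mu a v * Dt mu cp1 v)
                                 + Dt a (\<lambda>w. \<Sum>b\<in>{2..m}. uc b b w * cp1 w) v))
          \<in> J m)"
    then have R1: "\<And>a. a \<in> {2..m} \<Longrightarrow> G1 a \<in> J m" and R2: "\<And>k a. k \<ge> 1 \<Longrightarrow> a \<in> {2..m} \<Longrightarrow> chi k a \<in> J m"
      and R3: "(\<lambda>v. cp0 v + Dt 1 cp1 v) \<in> J m" and R4: "Lap m cp1 \<in> J m"
      and R6: "G6 \<in> J m" and R7: "\<And>a. a \<in> {2..m} \<Longrightarrow> G7 a \<in> J m"
      unfolding G1_def G6_def G7_def by blast+
    have E2J: "E2 k a \<in> J m" if a: "a \<in> {2..m}" for k a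
    proof (cases "k = 0")
      case True
      have "(\<lambda>v. (G7 a v + Dt 1 (G1 a) v) + (\<lambda>v. 2 * cp1 v) v * CE m (unit a) v) \<in> J m"
        by (intro J_add R7 a J_Dt R1 one J_mult CEaJ ABcp1)
      then show ?thesis unfolding True by (rule J_eq) (simp add: I[OF a])
    next
      case False
      show ?thesis
      proof (cases "k = 1")
        case True
        have "(\<lambda>v. Dt 1 (chi 1 a) v + G1 a v) \<in> J m"
          by (intro J_add J_Dt R2 R1 a one) simp
        then show ?thesis unfolding True
        proof (rule J_eq)
          fix v show "Dt 1 (chi 1 a) v + G1 a v = E2 1 a v" using E2_1[where a=a and v=v] by linarith
        qed
      next
        case False
        then have k2: "k \<ge> 2" using \<open>k \<noteq> 0\<close> by simp
        have "(\<lambda>v. Dt 1 (chi k a) v + chi (k - 1) a v) \<in> J m"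
          by (intro J_add J_Dt R2 a one) (use k2 in simp)+
        then show ?thesis by (rule J_eq) (simp add: E2_k[OF k2])
      qed
    qed
    have E3: "(\<lambda>v. Dt 1 cp0 v - Lap' m cp1 v) \<in> J m"
    proof -
      have "(\<lambda>v. Dt 1 (\<lambda>v. cp0 v + Dt 1 cp1 v) v - Lap m cp1 v) \<in> J m"
        by (intro J_diff J_Dt R3 R4 one)
      then show ?thesis by (rule J_eq) (simp add: Dt_add scp0 scp1 Lap_eq)
    qed
    have E4: "(\<lambda>v. Dt 1 cp1 v + cp0 v) \<in> J m"
      by (rule J_eq[OF R3]) simp
    show "(\<lambda>v. Dt 1 cu v + 2 * (\<Sum>a\<in>{2..m}. Dt a (\<lambda>w. uc a 1 w * cp1 w) v)) \<in> J m
     \<and> (\<forall>k. \<forall>a\<in>{2..m}. E2 k a \<in> J m)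
     \<and> (\<lambda>v. Dt 1 cp0 v - Lap' m cp1 v) \<in> J m
     \<and> (\<lambda>v. Dt 1 cp1 v + cp0 v) \<in> J m"
      using R6 E2J E3 E4 unfolding G6_def by blast
  qed
qed

end
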